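(* Let $S=(s_1,\dots,s_m)\in[n]^m$ and let $P=([a_1,b_1],\dots,[a_k,b_k])$ be a partition of $[n]$ into $k$ consecutive intervals, so $a_1=1$, $b_k=n$ and $a_{i+1}=b_i+1$. For each $i$, let $S_i$ be the sequence obtained by going through $S$ in order and, for each $s_j\in[a_i,b_i]$, appending $s_j-a_i+1$; thus $S_i$ is a sequence over $[b_i-a_i+1]$. Let $\tilde S=(\tilde s_1,\dots,\tilde s_m)\in[k]^m$ with $\tilde s_j=i$ iff $s_j\in[a_i,b_i]$. Then $\mathrm{OPT}(S)\le\sum_{i=1}^k\mathrm{OPT}(S_i)+3\,\mathrm{OPT}(\tilde S)$.
   Context: Dynamic BST model: for a sequence over key set $[N]$, an algorithm first chooses an initial BST on $[N]$. To serve access $s_t$ it touches a set of nodes forming a connected subtree containing the root and $s_t$, may rearrange the touched nodes into any BST shape (untouched subtrees reattached in the unique valid way), and pays the number of touched nodes. $\mathrm{OPT}$ of a sequence is the minimum total cost over all offline algorithms on its key set. *)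

theory Defs
  imports Main "HOL-Library.Tree"
begin

text \<open>Dynamic BST model. A BST on key set [N] is a tree t with inorder t = [1..<N+1].
  Nodes are identified with their keys.\<close>

fun path_to :: "nat tree \<Rightarrow> nat \<Rightarrow> nat list" where
  "path_to Leaf v = []"
| "path_to (Node l x r) v =
     x # (if v = x then [] else if v < x then path_to l v else path_to r v)"

fun subtree_at :: "nat tree \<Rightarrow> nat \<Rightarrow> nat tree" where
  "subtree_at Leaf v = Leaf"
| "subtree_at (Node l x r) v =
     (if v = x then Node l x r else if v < x then subtree_at l v else subtree_at r v)"

text \<open>One access step: serving access s in tree T by touching the node set X
  (a connected subtree containing the root and s) and rearranging it, producing T'.
  The touched nodes may be rearranged into any BST shape; untouched nodes keep their
  subtrees (i.e. untouched subtrees are reattached unchanged).\<close>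
definition bst_step :: "nat tree \<Rightarrow> nat \<Rightarrow> nat set \<Rightarrow> nat tree \<Rightarrow> bool" where
  "bst_step T s X T' \<longleftrightarrow>
     X \<subseteq> set_tree T \<and> s \<in> X \<and> (\<forall>v\<in>X. set (path_to T v) \<subseteq> X) \<and>
     inorder T' = inorder T \<and>
     (\<forall>v \<in> set_tree T - X. subtree_at T' v = subtree_at T v)"

definition bst_exec :: "nat \<Rightarrow> nat list \<Rightarrow> nat tree list \<Rightarrow> nat set list \<Rightarrow> bool" where
  "bst_exec N S Ts Xs \<longleftrightarrow>
     length Ts = length S + 1 \<and> length Xs = length S \<and>
     inorder (Ts ! 0) = [1..<N+1] \<and>
     (\<forall>j < length S. bst_step (Ts ! j) (S ! j) (Xs ! j) (Ts ! Suc j))"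

definition OPT :: "nat \<Rightarrow> nat list \<Rightarrow> nat" where
  "OPT N S = Inf {sum_list (map card Xs) | Ts Xs. bst_exec N S Ts Xs}"

end

theory Submission
  imports Defs
begin

lemma path_to_subset: "set (path_to t v) \<subseteq> set_tree t"
  by (induction t) auto

lemma subtree_at_subset: "set_tree (subtree_at t v) \<subseteq> set_tree t"
  by (induction t) auto

lemma subtree_at_node: "bst t \<Longrightarrow> v \<in> set_tree t \<Longrightarrow> \<exists>l r. subtree_at t v = Node l v r"
  by (induction t) auto

lemma in_subtree_path: "bst t \<Longrightarrow> x \<in> set_tree (subtree_at t j) \<Longrightarrow> j \<in> set (path_to t x)"
proof (induction t)
  case Leaf then show ?case by simp
next
  case (Node l y r)
  show ?case
  proof (cases "j = y")
    case True then show ?thesis by simp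
  next
    case False
    show ?thesis
    proof (cases "j < y")
      case True
      with Node.prems False have "x \<in> set_tree (subtree_at l j)" by simp
      moreover then have "x \<in> set_tree l" using subtree_at_subset by blast
      ultimately show ?thesis using Node True False by auto
    next
      case c: False
      with Node.prems False have "x \<in> set_tree (subtree_at r j)" by simp
      moreover then have "x \<in> set_tree r" using subtree_at_subset by blast
      ultimately show ?thesis using Node c False by auto
    qed
  qed
qed

fun rem :: "nat \<Rightarrow> nat tree \<Rightarrow> nat tree" where
  "rem m Leaf = Leaf"
| "rem m (Node l x r) = (if m = x then (if l = Leaf then r else l)
     else if m < x then Node (rem m l) x r else Node l x (rem m r))"

definition leafch :: "nat \<Rightarrow> nat tree \<Rightarrow> bool" where
  "leafch m t \<longleftrightarrow> (\<forall>l x r. subtree_at t m = Node l x r \<longrightarrow> l = Leaf \<or> r = Leaf)"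

lemma leafch_lI: "leafch m l \<Longrightarrow> m < x \<Longrightarrow> leafch m (Node l x r)"
  by (simp add: leafch_def)
lemma leafch_rI: "leafch m r \<Longrightarrow> x < m \<Longrightarrow> leafch m (Node l x r)"
  by (simp add: leafch_def)

lemma leafch_min: "bst t \<Longrightarrow> \<forall>x\<in>set_tree t. m \<le> x \<Longrightarrow> leafch m t"
proof (induction t)
  case Leaf then show ?case by (simp add: leafch_def)
next
  case (Node l y r)
  show ?case
  proof (cases "m = y")
    case True
    have "l = Leaf"
    proof (rule ccontr)
      assume "l \<noteq> Leaf"
      then obtain z where z: "z \<in> set_tree l" by (cases l) auto
      then have "z < y" using Node.prems(1) by simp
      moreover have "m \<le> z" using z Node.prems(2) by simp
      ultimately show False using True by simp
    qed
    then show ?thesis using True by (simp add: leafch_def)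
  next
    case False
    have "m \<le> y" using Node.prems(2) by simp
    with False have my: "m < y" by simp
    have "leafch m l" using Node.IH(1) Node.prems by simp
    then show ?thesis using leafch_lI my by blast
  qed
qed

lemma leafch_max: "bst t \<Longrightarrow> \<forall>x\<in>set_tree t. x \<le> m \<Longrightarrow> leafch m t"
proof (induction t)
  case Leaf then show ?case by (simp add: leafch_def)
next
  case (Node l y r)
  show ?case
  proof (cases "m = y")
    case True
    have "r = Leaf"
    proof (rule ccontr)
      assume "r \<noteq> Leaf"
      then obtain z where z: "z \<in> set_tree r" by (cases r) auto
      then have "y < z" using Node.prems(1) by simp
      moreover have "z \<le> m" using z Node.prems(2) by simp
      ultimately show False using True by simp
    qed
    then show ?thesis using True by (simp add: leafch_def)
  next
    case False
    have "y \<le> m" using Node.prems(2) by simp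
    with False have my: "y < m" by simp
    have "leafch m r" using Node.IH(2) Node.prems by simp
    then show ?thesis using leafch_rI my by blast
  qed
qed

lemma rem_notin: "m \<notin> set_tree t \<Longrightarrow> rem m t = t"
  by (induction t) auto

lemma leafch_l: "leafch m (Node l x r) \<Longrightarrow> m < x \<Longrightarrow> leafch m l"
  by (simp add: leafch_def)
lemma leafch_r: "leafch m (Node l x r) \<Longrightarrow> x < m \<Longrightarrow> leafch m r"
  by (simp add: leafch_def)

lemma leafch_x: "leafch x (Node l x r) \<Longrightarrow> l = Leaf \<or> r = Leaf"
  by (simp add: leafch_def)

lemma rem_inorder: "bst t \<Longrightarrow> leafch m t \<Longrightarrow> inorder (rem m t) = filter (\<lambda>x. x \<noteq> m) (inorder t)"
proof (induction t)
  case Leaf then show ?case by simp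
next
  case (Node l x r)
  have fl: "filter (\<lambda>z. z \<noteq> m) (inorder l) = inorder l" if "x \<le> m"
  proof (rule filter_True)
    show "\<forall>z\<in>set (inorder l). z \<noteq> m" using Node.prems(1) that by fastforce
  qed
  have fr: "filter (\<lambda>z. z \<noteq> m) (inorder r) = inorder r" if "m \<le> x"
  proof (rule filter_True)
    show "\<forall>z\<in>set (inorder r). z \<noteq> m" using Node.prems(1) that by fastforce
  qed
  show ?case
  proof (cases "m = x")
    case True
    then have "l = Leaf \<or> r = Leaf" using Node.prems(2) leafch_x by blast
    then show ?thesis using True fl fr by auto
  next
    case False
    show ?thesis
    proof (cases "m < x")
      case True
      then have "inorder (rem m l) = filter (\<lambda>x. x \<noteq> m) (inorder l)"
        using Node.IH(1) Node.prems leafch_l by simp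
      then show ?thesis using True False fr by simp
    next
      case c: False
      then have "inorder (rem m r) = filter (\<lambda>x. x \<noteq> m) (inorder r)"
        using Node.IH(2) Node.prems leafch_r False by simp
      then show ?thesis using c False fl by simp
    qed
  qed
qed

lemma rem_path: "bst t \<Longrightarrow> leafch m t \<Longrightarrow> v \<in> set_tree t \<Longrightarrow> v \<noteq> m \<Longrightarrow>
   set (path_to (rem m t) v) \<subseteq> set (path_to t v)"
proof (induction t)
  case Leaf then show ?case by simp
next
  case (Node l x r)
  show ?case
  proof (cases "m = x")
    case True
    then have "l = Leaf \<or> r = Leaf" using Node.prems(2) leafch_x by blast
    then show ?thesis
    proof
      assume l: "l = Leaf"
      then have "v \<in> set_tree r" "x < v" using Node.prems True by auto
      then show ?thesis using l True by auto
    next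
      assume r: "r = Leaf"
      then have "v \<in> set_tree l" "v < x" using Node.prems True by auto
      then show ?thesis using r True by (cases l) auto
    qed
  next
    case False
    show ?thesis
    proof (cases "m < x")
      case True
      have "v < x \<Longrightarrow> set (path_to (rem m l) v) \<subseteq> set (path_to l v)"
        using Node.IH(1) Node.prems leafch_l[OF Node.prems(2) True] by auto
      then show ?thesis using True False by auto
    next
      case c: False
      have "x < v \<Longrightarrow> set (path_to (rem m r) v) \<subseteq> set (path_to r v)"
        using Node.IH(2) Node.prems leafch_r[OF Node.prems(2)] c False by auto
      then show ?thesis using c False by auto
    qed
  qed
qed

lemma rem_sub: "bst t \<Longrightarrow> leafch m t \<Longrightarrow> v \<in> set_tree t \<Longrightarrow> v \<noteq> m \<Longrightarrow>
   subtree_at (rem m t) v = rem m (subtree_at t v)"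
proof (induction t)
  case Leaf then show ?case by simp
next
  case (Node l x r)
  have nl: "rem m (subtree_at l v) = subtree_at l v" if "x \<le> m"
    using Node.prems that subtree_at_subset rem_notin by (metis in_mono leD tree.set_intros(1) bst_wrt.simps(2))
  have nr: "rem m (subtree_at r v) = subtree_at r v" if "m \<le> x"
    using Node.prems that subtree_at_subset rem_notin by (metis in_mono leD tree.set_intros(3) bst_wrt.simps(2))
  show ?case
  proof (cases "m = x")
    case True
    then have "l = Leaf \<or> r = Leaf" using Node.prems(2) leafch_x by blast
    then show ?thesis
    proof
      assume l: "l = Leaf"
      then have "v \<in> set_tree r" "x < v" using Node.prems True by auto
      then show ?thesis using l True nr by auto
    next
      assume r: "r = Leaf"
      then have "v \<in> set_tree l" "v < x" using Node.prems True by auto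
      then show ?thesis using r True nl by (cases l) auto
    qed
  next
    case False
    show ?thesis
    proof (cases "m < x")
      case True
      have "v < x \<Longrightarrow> subtree_at (rem m l) v = rem m (subtree_at l v)"
        using Node.IH(1) Node.prems leafch_l[OF Node.prems(2) True] by auto
      then show ?thesis using True False nr by auto
    next
      case c: False
      have "x < v \<Longrightarrow> subtree_at (rem m r) v = rem m (subtree_at r v)"
        using Node.IH(2) Node.prems leafch_r[OF Node.prems(2)] c False by auto
      then show ?thesis using c False nl by auto
    qed
  qed
qed


lemma bst_upt: "inorder t = [a..<c] \<Longrightarrow> bst t"
  by (simp add: bst_iff_sorted_wrt_less)

lemma set_upt_tree: "inorder t = [a..<c] \<Longrightarrow> set_tree t = {a..<c}"
  by (metis set_inorder set_upt)

lemma filt1: "filter (\<lambda>x. x \<noteq> a) [a..<Suc b] = [Suc a..<Suc b]" if "a \<le> b"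
proof -
  have "[a..<Suc b] = a # [Suc a..<Suc b]" using that upt_rec by simp
  moreover have "filter (\<lambda>x. x \<noteq> a) [Suc a..<Suc b] = [Suc a..<Suc b]" by (rule filter_True) auto
  ultimately show ?thesis by simp
qed

lemma filt2: "filter (\<lambda>x. x \<noteq> b) [Suc a..<Suc b] = [Suc a..<b]" if "a \<le> b"
proof (cases "a = b")
  case True then show ?thesis by simp
next
  case False
  then have "[Suc a..<Suc b] = [Suc a..<b] @ [b]" using that by simp
  moreover have "filter (\<lambda>x. x \<noteq> b) [Suc a..<b] = [Suc a..<b]" by (rule filter_True) auto
  ultimately show ?thesis by simp
qed

lemma dr_facts:
  assumes t: "inorder t = [a..<Suc b]" and ab: "a \<le> b"
  shows "bst (rem a t)" "leafch a t" "leafch b (rem a t)" "inorder (rem a t) = [Suc a..<Suc b]"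
    "inorder (rem b (rem a t)) = [Suc a..<b]"
proof -
  have bt: "bst t" using t bst_upt by blast
  show la: "leafch a t" using leafch_min[OF bt] set_upt_tree[OF t] by simp
  show i1: "inorder (rem a t) = [Suc a..<Suc b]" using rem_inorder[OF bt la] t filt1[OF ab] by simp
  show b1: "bst (rem a t)" using i1 bst_upt by blast
  show lb: "leafch b (rem a t)" using leafch_max[OF b1] set_upt_tree[OF i1] by simp
  show "inorder (rem b (rem a t)) = [Suc a..<b]" using rem_inorder[OF b1 lb] i1 filt2[OF ab] by simp
qed

lemma dr_path:
  assumes t: "inorder t = [a..<Suc b]" and v: "a < v" "v < b"
  shows "set (path_to (rem b (rem a t)) v) \<subseteq> set (path_to t v)"
proof -
  have ab: "a \<le> b" using v by simp
  note f = dr_facts[OF t ab]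
  have bt: "bst t" using t bst_upt by blast
  have vt: "v \<in> set_tree t" using set_upt_tree[OF t] v by simp
  have v1: "v \<in> set_tree (rem a t)" using set_upt_tree[OF f(4)] v by simp
  show ?thesis using rem_path[OF f(1) f(3) v1] rem_path[OF bt f(2) vt] v by force
qed

lemma dr_sub:
  assumes t: "inorder t = [a..<Suc b]" and v: "a < v" "v < b"
  shows "subtree_at (rem b (rem a t)) v = rem b (rem a (subtree_at t v))"
proof -
  have ab: "a \<le> b" using v by simp
  note f = dr_facts[OF t ab]
  have bt: "bst t" using t bst_upt by blast
  have vt: "v \<in> set_tree t" using set_upt_tree[OF t] v by simp
  have v1: "v \<in> set_tree (rem a t)" using set_upt_tree[OF f(4)] v by simp
  show ?thesis using rem_sub[OF f(1) f(3) v1] rem_sub[OF bt f(2) vt] v by force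
qed


fun ph :: "(nat \<Rightarrow> nat) \<Rightarrow> (nat \<Rightarrow> nat) \<Rightarrow> (nat \<Rightarrow> nat tree) \<Rightarrow> nat tree \<Rightarrow> nat tree" where
  "ph a b P Leaf = Leaf"
| "ph a b P (Node l j r) = Node (ph a b P l) (a j)
     (if a j = b j then ph a b P r else Node (P j) (b j) (ph a b P r))"

definition ordb :: "(nat \<Rightarrow> nat) \<Rightarrow> (nat \<Rightarrow> nat) \<Rightarrow> nat set \<Rightarrow> bool" where
  "ordb a b A \<longleftrightarrow> (\<forall>j\<in>A. a j \<le> b j) \<and> (\<forall>j\<in>A. \<forall>j'\<in>A. j < j' \<longrightarrow> b j < a j')"

lemma ordb_mono: "ordb a b B \<Longrightarrow> A \<subseteq> B \<Longrightarrow> ordb a b A"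
  unfolding ordb_def by blast

lemma upt_split3: "a \<le> b \<Longrightarrow> [a..<Suc b] = a # (if a = b then [] else [Suc a..<b] @ [b])"
proof (cases "a = b")
  case True then show ?thesis by simp
next
  case False
  assume "a \<le> b"
  with False have ab: "a < b" by simp
  have "[a..<Suc b] = [a..<b] @ [b]" using ab by simp
  also have "[a..<b] = a # [Suc a..<b]" using ab upt_conv_Cons by blast
  finally show ?thesis using False by simp
qed

lemma ph_inorder:
  "(\<forall>j\<in>set_tree T. inorder (P j) = [Suc (a j)..<b j]) \<Longrightarrow> ordb a b (set_tree T) \<Longrightarrow>
   inorder (ph a b P T) = concat (map (\<lambda>j. [a j..<Suc (b j)]) (inorder T))"
proof (induction T)
  case Leaf then show ?case by simp
next
  case (Node l j r)
  have o: "ordb a b (set_tree l)" "ordb a b (set_tree r)" using Node.prems(2) ordb_mono by auto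
  have ab: "a j \<le> b j" using Node.prems(2) by (simp add: ordb_def)
  have pj: "inorder (P j) = [Suc (a j)..<b j]" using Node.prems(1) by simp
  have il: "inorder (ph a b P l) = concat (map (\<lambda>j. [a j..<Suc (b j)]) (inorder l))"
    using Node.IH(1) o(1) Node.prems(1) by simp
  have ir: "inorder (ph a b P r) = concat (map (\<lambda>j. [a j..<Suc (b j)]) (inorder r))"
    using Node.IH(2) o(2) Node.prems(1) by simp
  show ?case using il ir upt_split3[OF ab] pj by auto
qed

lemma ph_cong: "(\<forall>j\<in>set_tree T. P j = P' j) \<Longrightarrow> ph a b P T = ph a b P' T"
  by (induction T) auto

lemma ph_node_sub: "a j < v \<Longrightarrow> v < b j \<Longrightarrow> subtree_at (ph a b P (Node l j r)) v = subtree_at (P j) v"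
  by simp

lemma ph_path:
  "bst T \<Longrightarrow> ordb a b (set_tree T) \<Longrightarrow> j0 \<in> set_tree T \<Longrightarrow> a j0 \<le> v \<Longrightarrow> v \<le> b j0 \<Longrightarrow>
   set (path_to (ph a b P T) v) \<subseteq> a ` set (path_to T j0) \<union> b ` set (path_to T j0) \<union>
     (if a j0 < v \<and> v < b j0 then set (path_to (P j0) v) else {})"
proof (induction T)
  case Leaf then show ?case by simp
next
  case (Node l j r)
  have o: "ordb a b (set_tree l)" "ordb a b (set_tree r)" using Node.prems(2) ordb_mono by auto
  have ab: "a j \<le> b j" using Node.prems(2) by (simp add: ordb_def)
  show ?case
  proof (cases "j0 = j")
    case True
    then show ?thesis using Node.prems(4,5) by auto
  next
    case False
    show ?thesis
    proof (cases "j0 < j")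
      case True
      then have jl: "j0 \<in> set_tree l" using Node.prems(1,3) False by auto
      have "b j0 < a j" using Node.prems(2,3) True unfolding ordb_def by auto
      then have vlt: "v < a j" using Node.prems(5) by simp
      have pt: "path_to (Node l j r) j0 = j # path_to l j0" using True by simp
      have "set (path_to (ph a b P l) v) \<subseteq> a ` set (path_to l j0) \<union> b ` set (path_to l j0) \<union>
        (if a j0 < v \<and> v < b j0 then set (path_to (P j0) v) else {})"
        using Node.IH(1) Node.prems jl o(1) by simp
      then show ?thesis using vlt pt by auto
    next
      case c: False
      then have jr: "j0 \<in> set_tree r" using Node.prems(1,3) False by auto
      have "b j < a j0" using Node.prems(2,3) c False unfolding ordb_def by auto
      then have vlt: "b j < v" using Node.prems(4) by simp
      have pt: "path_to (Node l j r) j0 = j # path_to r j0" using c False by simp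
      have "set (path_to (ph a b P r) v) \<subseteq> a ` set (path_to r j0) \<union> b ` set (path_to r j0) \<union>
        (if a j0 < v \<and> v < b j0 then set (path_to (P j0) v) else {})"
        using Node.IH(2) Node.prems jr o(2) by simp
      then show ?thesis using vlt pt ab by auto
    qed
  qed
qed

lemma ph_sub:
  "bst T \<Longrightarrow> ordb a b (set_tree T) \<Longrightarrow> j0 \<in> set_tree T \<Longrightarrow> a j0 \<le> v \<Longrightarrow> v \<le> b j0 \<Longrightarrow>
   subtree_at (ph a b P T) v = subtree_at (ph a b P (subtree_at T j0)) v"
proof (induction T)
  case Leaf then show ?case by simp
next
  case (Node l j r)
  have o: "ordb a b (set_tree l)" "ordb a b (set_tree r)" using Node.prems(2) ordb_mono by auto
  have ab: "a j \<le> b j" using Node.prems(2) by (simp add: ordb_def)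
  show ?case
  proof (cases "j0 = j")
    case True
    then show ?thesis by simp
  next
    case False
    show ?thesis
    proof (cases "j0 < j")
      case True
      then have jl: "j0 \<in> set_tree l" using Node.prems(1,3) False by auto
      have "b j0 < a j" using Node.prems(2,3) True unfolding ordb_def by auto
      then have vlt: "v < a j" using Node.prems(5) by simp
      have "subtree_at (ph a b P l) v = subtree_at (ph a b P (subtree_at l j0)) v"
        using Node.IH(1) Node.prems jl o(1) by simp
      then show ?thesis using vlt True by auto
    next
      case c: False
      then have jr: "j0 \<in> set_tree r" using Node.prems(1,3) False by auto
      have "b j < a j0" using Node.prems(2,3) c False unfolding ordb_def by auto
      then have vlt: "b j < v" using Node.prems(4) by simp
      have "subtree_at (ph a b P r) v = subtree_at (ph a b P (subtree_at r j0)) v"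
        using Node.IH(2) Node.prems jr o(2) by simp
      then show ?thesis using vlt c False ab by auto
    qed
  qed
qed


definition PB :: "(nat \<Rightarrow> nat) \<Rightarrow> (nat \<Rightarrow> nat) \<Rightarrow> (nat \<Rightarrow> nat tree) \<Rightarrow> nat \<Rightarrow> nat tree" where
  "PB a b Bl j = rem (b j) (rem (a j) (Bl j))"

lemma ph_set:
  assumes "\<forall>j\<in>set_tree T. inorder (P j) = [Suc (a j)..<b j]" "ordb a b (set_tree T)"
  shows "set_tree (ph a b P T) = (\<Union>j\<in>set_tree T. {a j..b j})"
proof -
  have "set_tree (ph a b P T) = set (inorder (ph a b P T))" by simp
  also have "\<dots> = (\<Union>j\<in>set_tree T. set [a j..<Suc (b j)])" using ph_inorder[OF assms] by (simp del: upt_Suc)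
  also have "\<dots> = (\<Union>j\<in>set_tree T. {a j..<Suc (b j)})" by (simp only: set_upt)
  finally show ?thesis by auto
qed

lemma card_bound:
  assumes "finite Xt" "finite Xi"
  shows "card (a ` Xt \<union> b ` Xt \<union> Xi) \<le> card Xi + 2 * card Xt"
proof -
  have "card (a ` Xt \<union> b ` Xt \<union> Xi) \<le> card (a ` Xt \<union> b ` Xt) + card Xi" by (rule card_Un_le)
  also have "card (a ` Xt \<union> b ` Xt) \<le> card (a ` Xt) + card (b ` Xt)" by (rule card_Un_le)
  also have "card (a ` Xt) \<le> card Xt" using assms by (simp add: card_image_le)
  also have "card (b ` Xt) \<le> card Xt" using assms by (simp add: card_image_le)
  finally show ?thesis by simp
qed

lemma sim_step:
  assumes top: "bst_step Tt i Xt Tt1"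
    and bT: "bst Tt"
    and oT: "ordb a b (set_tree Tt)"
    and Bin: "\<forall>j\<in>set_tree Tt. inorder (Bl j) = [a j..<Suc (b j)]"
    and blk: "bst_step (Bl i) s Xi B1"
  shows "bst_step (ph a b (PB a b Bl) Tt) s (a ` Xt \<union> b ` Xt \<union> Xi) (ph a b (PB a b (Bl(i:=B1))) Tt1)"
proof -
  define P where "P = PB a b Bl"
  define P' where "P' = PB a b (Bl(i:=B1))"
  define X where "X = a ` Xt \<union> b ` Xt \<union> Xi"
  have tXt: "Xt \<subseteq> set_tree Tt" and ti: "i \<in> Xt" and tpath: "\<forall>v\<in>Xt. set (path_to Tt v) \<subseteq> Xt"
    and tin: "inorder Tt1 = inorder Tt"
    and tsub: "\<forall>v\<in>set_tree Tt - Xt. subtree_at Tt1 v = subtree_at Tt v"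
    using top unfolding bst_step_def by auto
  have bXi: "Xi \<subseteq> set_tree (Bl i)" and bs: "s \<in> Xi" and bpath: "\<forall>v\<in>Xi. set (path_to (Bl i) v) \<subseteq> Xi"
    and bin: "inorder B1 = inorder (Bl i)"
    and bsub: "\<forall>v\<in>set_tree (Bl i) - Xi. subtree_at B1 v = subtree_at (Bl i) v"
    using blk unfolding bst_step_def by auto
  have iT: "i \<in> set_tree Tt" using ti tXt by auto
  have stT: "set_tree Tt1 = set_tree Tt" using tin by (metis set_inorder)
  have bT1: "bst Tt1" using bT tin by (simp add: bst_iff_sorted_wrt_less)
  have oT1: "ordb a b (set_tree Tt1)" using oT stT by simp
  have abj: "a j \<le> b j" if "j \<in> set_tree Tt" for j using oT that by (simp add: ordb_def)
  have Bi: "inorder (Bl i) = [a i..<Suc (b i)]" using Bin iT by simp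
  have B1i: "inorder B1 = [a i..<Suc (b i)]" using bin Bi by simp
  have Bin': "\<forall>j\<in>set_tree Tt. inorder ((Bl(i:=B1)) j) = [a j..<Suc (b j)]" using Bin B1i by (simp del: upt_Suc)
  have Pin: "\<forall>j\<in>set_tree Tt. inorder (P j) = [Suc (a j)..<b j]"
    using Bin abj dr_facts(5) unfolding P_def PB_def by blast
  have Pin': "\<forall>j\<in>set_tree Tt. inorder (P' j) = [Suc (a j)..<b j]"
    using Bin' abj dr_facts(5) unfolding P'_def PB_def by blast
  have Pne: "P' j = P j" if "j \<noteq> i" for j using that unfolding P_def P'_def PB_def by simp
  have setB: "set_tree (Bl i) = {a i..<Suc (b i)}" using set_upt_tree[OF Bi] .
  have setph: "set_tree (ph a b P Tt) = (\<Union>j\<in>set_tree Tt. {a j..b j})"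
    using ph_set[OF Pin oT] .
  have c1: "X \<subseteq> set_tree (ph a b P Tt)"
  proof
    fix v assume "v \<in> X"
    then consider j where "j \<in> Xt" "v = a j" | j where "j \<in> Xt" "v = b j" | "v \<in> Xi"
      unfolding X_def by blast
    then show "v \<in> set_tree (ph a b P Tt)"
    proof cases
      case 1 then show ?thesis using setph tXt abj by force
    next
      case 2 then show ?thesis using setph tXt abj by force
    next
      case 3 then show ?thesis using setph setB bXi iT by force
    qed
  qed
  have c3: "set (path_to (ph a b P Tt) v) \<subseteq> X" if vX: "v \<in> X" for v
  proof -
    have pT: "a ` set (path_to Tt j) \<union> b ` set (path_to Tt j) \<subseteq> X" if "j \<in> Xt" for j
      using tpath that unfolding X_def by blast
    from vX consider j where "j \<in> Xt" "v = a j" | j where "j \<in> Xt" "v = b j" | "v \<in> Xi"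
      unfolding X_def by blast
    then show ?thesis
    proof cases
      case 1
      then have "j \<in> set_tree Tt" using tXt by auto
      then have "set (path_to (ph a b P Tt) v) \<subseteq> a ` set (path_to Tt j) \<union> b ` set (path_to Tt j)"
        using ph_path[OF bT oT, of j v P] 1 abj by auto
      then show ?thesis using pT[OF 1(1)] by blast
    next
      case 2
      then have "j \<in> set_tree Tt" using tXt by auto
      then have "set (path_to (ph a b P Tt) v) \<subseteq> a ` set (path_to Tt j) \<union> b ` set (path_to Tt j)"
        using ph_path[OF bT oT, of j v P] 2 abj by auto
      then show ?thesis using pT[OF 2(1)] by blast
    next
      case 3
      then have av: "a i \<le> v" "v \<le> b i" using bXi setB by auto
      have pp: "set (path_to (ph a b P Tt) v) \<subseteq> a ` set (path_to Tt i) \<union> b ` set (path_to Tt i) \<union>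
          (if a i < v \<and> v < b i then set (path_to (P i) v) else {})"
        using ph_path[OF bT oT iT av] .
      have "(if a i < v \<and> v < b i then set (path_to (P i) v) else {}) \<subseteq> Xi"
      proof (cases "a i < v \<and> v < b i")
        case True
        then have "set (path_to (P i) v) \<subseteq> set (path_to (Bl i) v)"
          using dr_path[OF Bi] unfolding P_def PB_def by blast
        then show ?thesis using True bpath 3 by auto
      next
        case False then show ?thesis by (subst if_not_P[OF False]) simp
      qed
      then show ?thesis using pp pT[OF ti] unfolding X_def by blast
    qed
  qed
  have c4: "inorder (ph a b P' Tt1) = inorder (ph a b P Tt)"
    using ph_inorder[OF Pin oT] ph_inorder[of Tt1 P' a b] Pin' oT1 stT tin by simp
  have c5: "subtree_at (ph a b P' Tt1) v = subtree_at (ph a b P Tt) v"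
    if v: "v \<in> set_tree (ph a b P Tt) - X" for v
  proof -
    obtain j0 where j0: "j0 \<in> set_tree Tt" "a j0 \<le> v" "v \<le> b j0" using v setph by auto
    have j01: "j0 \<in> set_tree Tt1" using j0 stT by simp
    show ?thesis
    proof (cases "j0 \<in> Xt")
      case False
      have ni: "j \<noteq> i" if "j \<in> set_tree (subtree_at Tt j0)" for j
      proof
        assume "j = i"
        then have "j0 \<in> set (path_to Tt i)" using in_subtree_path[OF bT] that by blast
        then show False using tpath ti False by blast
      qed
      have "subtree_at (ph a b P' Tt1) v = subtree_at (ph a b P' (subtree_at Tt1 j0)) v"
        using ph_sub[OF bT1 oT1 j01 j0(2,3)] .
      also have "subtree_at Tt1 j0 = subtree_at Tt j0" using tsub j0(1) False by blast
      also have "ph a b P' (subtree_at Tt j0) = ph a b P (subtree_at Tt j0)"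
        using ph_cong ni Pne by metis
      also have "subtree_at (ph a b P (subtree_at Tt j0)) v = subtree_at (ph a b P Tt) v"
        using ph_sub[OF bT oT j0] by simp
      finally show ?thesis .
    next
      case True
      then have vint: "a j0 < v" "v < b j0" using v j0 unfolding X_def by (auto simp: le_less)
      obtain l r where n1: "subtree_at Tt1 j0 = Node l j0 r" using subtree_at_node[OF bT1 j01] by blast
      obtain l' r' where n0: "subtree_at Tt j0 = Node l' j0 r'" using subtree_at_node[OF bT j0(1)] by blast
      have "subtree_at (ph a b P' Tt1) v = subtree_at (P' j0) v"
        using ph_sub[OF bT1 oT1 j01 j0(2,3)] n1 vint by simp
      also have "\<dots> = subtree_at (P j0) v"
      proof (cases "j0 = i")
        case False then show ?thesis using Pne by simp
      next
        case True
        have vXi: "v \<notin> Xi" using v unfolding X_def by blast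
        have vB: "v \<in> set_tree (Bl i)" using setB vint True by auto
        have "subtree_at (P' j0) v = rem (b i) (rem (a i) (subtree_at B1 v))"
          using dr_sub[OF B1i] vint True unfolding P'_def PB_def by simp
        also have "subtree_at B1 v = subtree_at (Bl i) v" using bsub vXi vB by blast
        also have "rem (b i) (rem (a i) (subtree_at (Bl i) v)) = subtree_at (P j0) v"
          using dr_sub[OF Bi] vint True unfolding P_def PB_def by simp
        finally show ?thesis .
      qed
      also have "\<dots> = subtree_at (ph a b P Tt) v"
        using ph_sub[OF bT oT j0] n0 vint by simp
      finally show ?thesis .
    qed
  qed
  have "bst_step (ph a b P Tt) s X (ph a b P' Tt1)"
    unfolding bst_step_def using c1 c3 c4 c5 bs unfolding X_def by blast
  then show ?thesis unfolding P_def P'_def X_def .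
qed


inductive run :: "nat tree \<Rightarrow> nat list \<Rightarrow> nat \<Rightarrow> bool" where
  run_nil: "run T [] 0"
| run_cons: "bst_step T s X T1 \<Longrightarrow> run T1 S c \<Longrightarrow> run T (s # S) (card X + c)"

lemma run_consE: "run T (s # S) c \<Longrightarrow> \<exists>X T1 c1. bst_step T s X T1 \<and> run T1 S c1 \<and> c = card X + c1"
  by (cases rule: run.cases) auto

lemma run_nilE: "run T [] c \<Longrightarrow> c = 0"
  by (cases rule: run.cases) auto

lemma exec_run: "length Ts = length S + 1 \<Longrightarrow> length Xs = length S \<Longrightarrow>
  (\<forall>j<length S. bst_step (Ts!j) (S!j) (Xs!j) (Ts!Suc j)) \<Longrightarrow> run (Ts!0) S (sum_list (map card Xs))"
proof (induction S arbitrary: Ts Xs)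
  case Nil then show ?case by (simp add: run_nil)
next
  case (Cons s S)
  obtain T0 Ts' where Ts: "Ts = T0 # Ts'" using Cons.prems(1) by (cases Ts) auto
  obtain X0 Xs' where Xs: "Xs = X0 # Xs'" using Cons.prems(2) by (cases Xs) auto
  have l: "length Ts' = length S + 1" "length Xs' = length S" using Cons.prems Ts Xs by auto
  have st: "\<forall>j<length S. bst_step (Ts'!j) (S!j) (Xs'!j) (Ts'!Suc j)"
  proof (intro allI impI)
    fix j assume "j < length S"
    then have "Suc j < length (s#S)" by simp
    then have "bst_step (Ts!Suc j) ((s#S)!Suc j) (Xs!Suc j) (Ts!Suc (Suc j))" using Cons.prems(3) by blast
    then show "bst_step (Ts'!j) (S!j) (Xs'!j) (Ts'!Suc j)" using Ts Xs by simp
  qed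
  have r: "run (Ts'!0) S (sum_list (map card Xs'))" using Cons.IH[OF l st] .
  have "0 < length (s#S)" by simp
  then have "bst_step (Ts!0) ((s#S)!0) (Xs!0) (Ts!Suc 0)" using Cons.prems(3) by blast
  then have "bst_step T0 s X0 (Ts'!0)" using Ts Xs by simp
  from run_cons[OF this r] show ?case using Ts Xs by simp
qed

lemma run_exec: "run T S c \<Longrightarrow> \<exists>Ts Xs. length Ts = length S + 1 \<and> length Xs = length S \<and> Ts!0 = T \<and>
   (\<forall>j<length S. bst_step (Ts!j) (S!j) (Xs!j) (Ts!Suc j)) \<and> sum_list (map card Xs) = c"
proof (induction rule: run.induct)
  case (run_nil T)
  show ?case by (rule exI[of _ "[T]"], rule exI[of _ "[]"]) simp
next
  case (run_cons T s X T1 S c)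
  then obtain Ts Xs where h: "length Ts = length S + 1" "length Xs = length S" "Ts!0 = T1"
    "\<forall>j<length S. bst_step (Ts!j) (S!j) (Xs!j) (Ts!Suc j)" "sum_list (map card Xs) = c" by blast
  show ?case
  proof (rule exI[of _ "T # Ts"], rule exI[of _ "X # Xs"], intro conjI)
    show "\<forall>j<length (s # S). bst_step ((T # Ts)!j) ((s # S)!j) ((X # Xs)!j) ((T # Ts)!Suc j)"
    proof (intro allI impI)
      fix j assume j: "j < length (s # S)"
      show "bst_step ((T # Ts)!j) ((s # S)!j) ((X # Xs)!j) ((T # Ts)!Suc j)"
      proof (cases j)
        case 0 then show ?thesis using run_cons.hyps(1) h(3) by simp
      next
        case (Suc j') then show ?thesis using h(4) j by simp
      qed
    qed
  qed (use h in simp_all)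
qed

lemma OPT_le: "inorder T = [1..<N+1] \<Longrightarrow> run T S c \<Longrightarrow> OPT N S \<le> c"
proof -
  assume i: "inorder T = [1..<N+1]" and r: "run T S c"
  obtain Ts Xs where h: "length Ts = length S + 1" "length Xs = length S" "Ts!0 = T"
    "\<forall>j<length S. bst_step (Ts!j) (S!j) (Xs!j) (Ts!Suc j)" "sum_list (map card Xs) = c"
    using run_exec[OF r] by blast
  have "bst_exec N S Ts Xs" unfolding bst_exec_def using h i by simp
  then have "c \<in> {sum_list (map card Xs) | Ts Xs. bst_exec N S Ts Xs}" using h(5) by blast
  then show ?thesis unfolding OPT_def by (simp add: cInf_lower)
qed

fun spine :: "nat list \<Rightarrow> nat tree" where
  "spine [] = Leaf"
| "spine (x # xs) = Node Leaf x (spine xs)"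

lemma inorder_spine: "inorder (spine xs) = xs"
  by (induction xs) auto

lemma run_trivial: "set S \<subseteq> set_tree T \<Longrightarrow> \<exists>c. run T S c"
proof (induction S)
  case Nil then show ?case using run_nil by blast
next
  case (Cons s S)
  have "bst_step T s (set_tree T) T" unfolding bst_step_def using Cons.prems path_to_subset by auto
  then show ?case using Cons run_cons by fastforce
qed

lemma OPT_attained: "\<forall>s\<in>set S. 1 \<le> s \<and> s \<le> N \<Longrightarrow> \<exists>T. inorder T = [1..<N+1] \<and> run T S (OPT N S)"
proof -
  assume a: "\<forall>s\<in>set S. 1 \<le> s \<and> s \<le> N"
  define T0 where "T0 = spine [1..<N+1]"
  have i0: "inorder T0 = [1..<N+1]" unfolding T0_def using inorder_spine by blast
  have "set S \<subseteq> set_tree T0" using a set_upt_tree[OF i0] by auto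
  then obtain c where "run T0 S c" using run_trivial by blast
  then obtain Ts Xs where h: "length Ts = length S + 1" "length Xs = length S" "Ts!0 = T0"
    "\<forall>j<length S. bst_step (Ts!j) (S!j) (Xs!j) (Ts!Suc j)" "sum_list (map card Xs) = c"
    using run_exec by blast
  have "bst_exec N S Ts Xs" unfolding bst_exec_def using h i0 by simp
  then have ne: "{sum_list (map card Xs) | Ts Xs. bst_exec N S Ts Xs} \<noteq> {}" by blast
  have "OPT N S \<in> {sum_list (map card Xs) | Ts Xs. bst_exec N S Ts Xs}"
    unfolding OPT_def using Inf_nat_def1[OF ne] .
  then obtain Ts' Xs' where e: "bst_exec N S Ts' Xs'" "OPT N S = sum_list (map card Xs')" by blast
  then have "run (Ts'!0) S (OPT N S)" using exec_run unfolding bst_exec_def by auto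
  then show ?thesis using e(1) unfolding bst_exec_def by blast
qed

lemma path_shift: "path_to (map_tree (\<lambda>x. x + c) t) (v + c) = map (\<lambda>x. x + c) (path_to t v)"
  by (induction t) auto

lemma sub_shift: "subtree_at (map_tree (\<lambda>x. x + c) t) (v + c) = map_tree (\<lambda>x. x + c) (subtree_at t v)"
  by (induction t) auto

lemma step_shift:
  assumes "bst_step T s X T'"
  shows "bst_step (map_tree (\<lambda>x. x + c) T) (s + c) ((\<lambda>x. x + c) ` X) (map_tree (\<lambda>x. x + c) T')"
proof -
  let ?f = "\<lambda>x::nat. x + c"
  have h: "X \<subseteq> set_tree T" "s \<in> X" "\<forall>v\<in>X. set (path_to T v) \<subseteq> X" "inorder T' = inorder T"
    "\<forall>v \<in> set_tree T - X. subtree_at T' v = subtree_at T v" using assms unfolding bst_step_def by auto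
  have p: "set (path_to (map_tree ?f T) w) \<subseteq> ?f ` X" if w: "w \<in> ?f ` X" for w
  proof -
    obtain v where v: "v \<in> X" "w = v + c" using w by blast
    have "set (path_to (map_tree ?f T) w) = ?f ` set (path_to T v)" using v(2) path_shift by simp
    then show ?thesis using h(3) v(1) by blast
  qed
  have s: "subtree_at (map_tree ?f T') w = subtree_at (map_tree ?f T) w"
    if w: "w \<in> set_tree (map_tree ?f T) - ?f ` X" for w
  proof -
    obtain v where v: "v \<in> set_tree T" "w = v + c" using w by (auto simp: tree.set_map)
    then have "v \<notin> X" using w by blast
    then have "subtree_at T' v = subtree_at T v" using h(5) v(1) by blast
    then show ?thesis using v(2) sub_shift by metis
  qed
  have s1: "?f ` X \<subseteq> set_tree (map_tree ?f T)" using h(1) by (simp add: tree.set_map image_mono)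
  have s2: "s + c \<in> ?f ` X" using h(2) by blast
  have s3: "inorder (map_tree ?f T') = inorder (map_tree ?f T)" using h(4) by (simp add: inorder_map)
  show ?thesis unfolding bst_step_def using s1 s2 s3 p s by blast
qed

lemma run_shift: "run T S k \<Longrightarrow> run (map_tree (\<lambda>x. x + c) T) (map (\<lambda>x. x + c) S) k"
proof (induction rule: run.induct)
  case (run_nil T) then show ?case by (simp add: run.run_nil)
next
  case (run_cons T s X T1 S k)
  have "card ((\<lambda>x::nat. x + c) ` X) = card X" by (simp add: card_image)
  then show ?case using run.run_cons[OF step_shift[OF run_cons.hyps(1)] run_cons.IH] by simp
qed

lemma map_plus_upt: "map (\<lambda>x. x + c) [i..<j] = [i+c..<j+c]"
  by (induction j) auto


lemma sim_run:
  assumes "list_all2 (\<lambda>s j. j \<in> K \<and> a j \<le> s \<and> s \<le> b j) S St"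
    and "run Tt St ct" "set_tree Tt = K" "bst Tt" "ordb a b K" "finite K"
    and "\<forall>j\<in>K. inorder (Bl j) = [a j..<Suc (b j)]"
    and "\<forall>j\<in>K. run (Bl j) (filter (\<lambda>s. a j \<le> s \<and> s \<le> b j) S) (c j)"
  shows "\<exists>c'. run (ph a b (PB a b Bl) Tt) S c' \<and> c' \<le> (\<Sum>j\<in>K. c j) + 2 * ct"
  using assms
proof (induction arbitrary: Tt ct Bl c rule: list_all2_induct)
  case Nil
  then have "ct = 0" using run_nilE by blast
  then show ?case using run_nil by blast
next
  case (Cons s S j St)
  have jK: "j \<in> K" and sj: "a j \<le> s" "s \<le> b j" using Cons.hyps(1) by auto
  obtain Xt Tt1 ct1 where t: "bst_step Tt j Xt Tt1" "run Tt1 St ct1" "ct = card Xt + ct1"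
    using run_consE[OF Cons.prems(1)] by blast
  have "run (Bl j) (filter (\<lambda>s. a j \<le> s \<and> s \<le> b j) (s # S)) (c j)"
    using Cons.prems(7) jK by blast
  then have "run (Bl j) (s # filter (\<lambda>s. a j \<le> s \<and> s \<le> b j) S) (c j)"
    using sj by simp
  then obtain Xi B1 cj1 where bl: "bst_step (Bl j) s Xi B1"
     "run B1 (filter (\<lambda>s. a j \<le> s \<and> s \<le> b j) S) cj1" "c j = card Xi + cj1"
    using run_consE by blast
  have tin: "inorder Tt1 = inorder Tt" using t(1) unfolding bst_step_def by simp
  have stT1: "set_tree Tt1 = K" using tin Cons.prems(2) by (metis set_inorder)
  have bT1: "bst Tt1" using Cons.prems(3) tin by (simp add: bst_iff_sorted_wrt_less)
  have bin: "inorder B1 = inorder (Bl j)" using bl(1) unfolding bst_step_def by simp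
  define Bl' where "Bl' = Bl(j := B1)"
  define c' where "c' = c(j := cj1)"
  have Bin': "\<forall>j'\<in>K. inorder (Bl' j') = [a j'..<Suc (b j')]"
    using Cons.prems(6) bin jK unfolding Bl'_def by (auto simp del: upt_Suc)
  have notin: "\<not> (a j' \<le> s \<and> s \<le> b j')" if "j' \<in> K" "j' \<noteq> j" for j'
  proof (cases "j' < j")
    case True
    then have "b j' < a j" using Cons.prems(4) that jK unfolding ordb_def by blast
    then show ?thesis using sj by simp
  next
    case False
    then have "j < j'" using that by simp
    then have "b j < a j'" using Cons.prems(4) that jK unfolding ordb_def by blast
    then show ?thesis using sj by simp
  qed
  have runs': "\<forall>j'\<in>K. run (Bl' j') (filter (\<lambda>s. a j' \<le> s \<and> s \<le> b j') S) (c' j')"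
  proof
    fix j' assume j': "j' \<in> K"
    show "run (Bl' j') (filter (\<lambda>s. a j' \<le> s \<and> s \<le> b j') S) (c' j')"
    proof (cases "j' = j")
      case True then show ?thesis using bl(2) unfolding Bl'_def c'_def by simp
    next
      case False
      then have "run (Bl j') (filter (\<lambda>s. a j' \<le> s \<and> s \<le> b j') (s # S)) (c j')"
        using Cons.prems(7) j' by blast
      then show ?thesis using notin[OF j' False] False unfolding Bl'_def c'_def by simp
    qed
  qed
  obtain c'' where ih: "run (ph a b (PB a b Bl') Tt1) S c''" "c'' \<le> (\<Sum>j\<in>K. c' j) + 2 * ct1"
    using Cons.IH[OF t(2) stT1 bT1 Cons.prems(4,5) Bin' runs'] by blast
  have oT: "ordb a b (set_tree Tt)" using Cons.prems(2,4) by simp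
  have BinT: "\<forall>j\<in>set_tree Tt. inorder (Bl j) = [a j..<Suc (b j)]" using Cons.prems(2,6) by simp
  have step: "bst_step (ph a b (PB a b Bl) Tt) s (a ` Xt \<union> b ` Xt \<union> Xi) (ph a b (PB a b Bl') Tt1)"
    using sim_step[OF t(1) Cons.prems(3) oT BinT bl(1)] unfolding Bl'_def .
  have fXt: "finite Xt" using t(1) unfolding bst_step_def by (meson finite_set_tree rev_finite_subset)
  have fXi: "finite Xi" using bl(1) unfolding bst_step_def by (meson finite_set_tree rev_finite_subset)
  have cb: "card (a ` Xt \<union> b ` Xt \<union> Xi) \<le> card Xi + 2 * card Xt" using card_bound[OF fXt fXi] .
  have sumc: "(\<Sum>j\<in>K. c j) = card Xi + (\<Sum>j\<in>K. c' j)"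
  proof -
    have "(\<Sum>j\<in>K. c j) = c j + (\<Sum>j\<in>K - {j}. c j)" using sum.remove[OF Cons.prems(5) jK] .
    moreover have "(\<Sum>j\<in>K. c' j) = c' j + (\<Sum>j\<in>K - {j}. c' j)" using sum.remove[OF Cons.prems(5) jK] .
    moreover have "(\<Sum>j\<in>K - {j}. c' j) = (\<Sum>j\<in>K - {j}. c j)" unfolding c'_def by (rule sum.cong) auto
    ultimately show ?thesis using bl(3) unfolding c'_def by simp
  qed
  have "run (ph a b (PB a b Bl) Tt) (s # S) (card (a ` Xt \<union> b ` Xt \<union> Xi) + c'')"
    using run_cons[OF step ih(1)] .
  moreover have "card (a ` Xt \<union> b ` Xt \<union> Xi) + c'' \<le> (\<Sum>j\<in>K. c j) + 2 * ct"
    using cb ih(2) sumc t(3) by simp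
  ultimately show ?case by blast
qed


theorem mainTheorem10:
  fixes n k :: nat and S St :: "nat list" and a b :: "nat \<Rightarrow> nat"
  assumes S_range: "\<forall>s\<in>set S. 1 \<le> s \<and> s \<le> n"
    and k_pos: "1 \<le> k"
    and a1: "a 1 = 1" and bk: "b k = n"
    and consec: "\<forall>i. 1 \<le> i \<and> i < k \<longrightarrow> a (i + 1) = b i + 1"
    and nonempty: "\<forall>i. 1 \<le> i \<and> i \<le> k \<longrightarrow> a i \<le> b i"
    and St_len: "length St = length S"
    and St_def: "\<forall>j < length S. \<forall>i. 1 \<le> i \<and> i \<le> k \<longrightarrow>
                    (St ! j = i \<longleftrightarrow> a i \<le> S ! j \<and> S ! j \<le> b i)"
  shows "OPT n S \<le>
           (\<Sum>i = 1..k. OPT (b i - a i + 1)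
               (map (\<lambda>s. s - a i + 1) (filter (\<lambda>s. a i \<le> s \<and> s \<le> b i) S)))
           + 3 * OPT k St"
proof -
  define K where "K = {1..k}"
  have fK: "finite K" unfolding K_def by simp
  have F1: "a j \<le> b j" if "j \<in> K" for j using nonempty that unfolding K_def by simp
  have F2d: "1 \<le> j \<longrightarrow> j + Suc d \<le> k \<longrightarrow> b j < a (j + Suc d)" for j d
  proof (induction d)
    case 0 then show ?case using consec by simp
  next
    case (Suc d)
    show ?case
    proof (intro impI)
      assume h: "1 \<le> j" "j + Suc (Suc d) \<le> k"
      then have "b j < a (j + Suc d)" using Suc by simp
      moreover have "a (j + Suc d) \<le> b (j + Suc d)" using nonempty h by simp
      moreover have "a (j + Suc d + 1) = b (j + Suc d) + 1" using consec h by simp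
      ultimately show "b j < a (j + Suc (Suc d))" by simp
    qed
  qed
  have F2: "b j < a j'" if "1 \<le> j" "j < j'" "j' \<le> k" for j j'
  proof -
    obtain d where "j' = j + Suc d" using \<open>j < j'\<close> less_iff_Suc_add by (metis add_Suc_right add.commute)
    then show ?thesis using F2d that by simp
  qed
  have oK: "ordb a b K" unfolding ordb_def K_def using F1 F2 unfolding K_def by auto
  have F3: "1 \<le> k' \<longrightarrow> k' \<le> k \<longrightarrow> concat (map (\<lambda>j. [a j..<Suc (b j)]) [1..<Suc k']) = [1..<Suc (b k')]" for k'
  proof (induction k')
    case 0 then show ?case by simp
  next
    case (Suc k')
    show ?case
    proof (intro impI)
      assume h: "1 \<le> Suc k'" "Suc k' \<le> k"
      show "concat (map (\<lambda>j. [a j..<Suc (b j)]) [1..<Suc (Suc k')]) = [1..<Suc (b (Suc k'))]"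
      proof (cases "k' = 0")
        case True
        have "[1..<Suc (Suc k')] = [1]" using True by simp
        then show ?thesis using a1 True by (simp del: upt_Suc)
      next
        case False
        have e1: "[1..<Suc (Suc k')] = [1..<Suc k'] @ [Suc k']" by simp
        have ih: "concat (map (\<lambda>j. [a j..<Suc (b j)]) [1..<Suc k']) = [1..<Suc (b k')]"
          using Suc.IH False h by simp
        have ak: "a (Suc k') = Suc (b k')" using consec False h by simp
        have "a (Suc k') \<le> b (Suc k')" using nonempty h by simp
        then have le: "Suc (b k') \<le> Suc (b (Suc k'))" using ak by simp
        have "concat (map (\<lambda>j. [a j..<Suc (b j)]) [1..<Suc (Suc k')]) = [1..<Suc (b k')] @ [Suc (b k')..<Suc (b (Suc k'))]"
          using e1 ih ak by (simp del: upt_Suc)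
        also have "\<dots> = [1..<Suc (b (Suc k'))]" using le upt_add_eq_append[of 1 "Suc (b k')" "Suc (b (Suc k')) - Suc (b k')"] by simp
        finally show ?thesis .
      qed
    qed
  qed
  have cover: "concat (map (\<lambda>j. [a j..<Suc (b j)]) [1..<Suc k]) = [1..<Suc n]" using F3[of k] k_pos bk by simp
  have blockex: "\<exists>i\<in>K. a i \<le> s \<and> s \<le> b i" if "1 \<le> s" "s \<le> n" for s
  proof -
    have "s \<in> set [1..<Suc n]" using that by (simp del: upt_Suc)
    then have "s \<in> set (concat (map (\<lambda>j. [a j..<Suc (b j)]) [1..<Suc k]))" using cover by simp
    then show ?thesis unfolding K_def by auto
  qed
  have nth: "St ! j \<in> K \<and> a (St ! j) \<le> S ! j \<and> S ! j \<le> b (St ! j)" if j: "j < length S" for j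
  proof -
    from j have "S ! j \<in> set S" by simp
    then obtain i where i: "i \<in> K" "a i \<le> S ! j" "S ! j \<le> b i" using blockex S_range by blast
    then have "St ! j = i" using St_def j unfolding K_def by simp
    then show ?thesis using i by simp
  qed
  have la2: "list_all2 (\<lambda>s j. j \<in> K \<and> a j \<le> s \<and> s \<le> b j) S St"
    using nth St_len by (simp add: list_all2_conv_all_nth)
  have Strange: "\<forall>x\<in>set St. 1 \<le> x \<and> x \<le> k"
  proof
    fix x assume "x \<in> set St"
    then obtain j where "j < length St" "x = St ! j" by (metis in_set_conv_nth)
    then have "x \<in> K" using nth St_len by simp
    then show "1 \<le> x \<and> x \<le> k" unfolding K_def by simp
  qed
  obtain Tt0 where tt: "inorder Tt0 = [1..<k+1]" "run Tt0 St (OPT k St)"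
    using OPT_attained[OF Strange] by blast
  have stT: "set_tree Tt0 = K" using set_upt_tree[OF tt(1)] unfolding K_def by auto
  have bT: "bst Tt0" using bst_upt[OF tt(1)] .
  have aj1: "1 \<le> a j" if "j \<in> K" for j
  proof (cases "j = 1")
    case True then show ?thesis using a1 by simp
  next
    case False
    then have "b 1 < a j" using F2[of 1 j] that unfolding K_def by simp
    then show ?thesis by simp
  qed
  define Sj where "Sj j = map (\<lambda>s. s - a j + 1) (filter (\<lambda>s. a j \<le> s \<and> s \<le> b j) S)" for j
  define cj where "cj j = OPT (b j - a j + 1) (Sj j)" for j
  have blocks: "\<forall>j\<in>K. \<exists>B. inorder B = [a j..<Suc (b j)] \<and> run B (filter (\<lambda>s. a j \<le> s \<and> s \<le> b j) S) (cj j)"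
  proof
    fix j assume jK: "j \<in> K"
    have rng: "\<forall>x\<in>set (Sj j). 1 \<le> x \<and> x \<le> b j - a j + 1" unfolding Sj_def by auto
    obtain T where T: "inorder T = [1..<b j - a j + 1 + 1]" "run T (Sj j) (cj j)"
      using OPT_attained[OF rng] unfolding cj_def by blast
    define c where "c = a j - 1"
    have r: "run (map_tree (\<lambda>x. x + c) T) (map (\<lambda>x. x + c) (Sj j)) (cj j)" using run_shift[OF T(2)] .
    have m: "map (\<lambda>x. x + c) (Sj j) = filter (\<lambda>s. a j \<le> s \<and> s \<le> b j) S"
      unfolding Sj_def map_map c_def using aj1[OF jK] by (intro map_idI) auto
    have "inorder (map_tree (\<lambda>x. x + c) T) = map (\<lambda>x. x + c) [1..<b j - a j + 1 + 1]" using T(1) by (simp add: inorder_map del: upt_Suc)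
    also have "\<dots> = [1 + c..<b j - a j + 1 + 1 + c]" by (rule map_plus_upt)
    also have "\<dots> = [a j..<Suc (b j)]" unfolding c_def using aj1[OF jK] F1[OF jK] by (simp del: upt_Suc)
    finally show "\<exists>B. inorder B = [a j..<Suc (b j)] \<and> run B (filter (\<lambda>s. a j \<le> s \<and> s \<le> b j) S) (cj j)"
      using r m by auto
  qed
  then obtain Bl where Bl: "\<forall>j\<in>K. inorder (Bl j) = [a j..<Suc (b j)] \<and> run (Bl j) (filter (\<lambda>s. a j \<le> s \<and> s \<le> b j) S) (cj j)"
    using bchoice[OF blocks] by blast
  obtain c' where sim: "run (ph a b (PB a b Bl) Tt0) S c'" "c' \<le> (\<Sum>j\<in>K. cj j) + 2 * OPT k St"
    using sim_run[OF la2 tt(2) stT bT oK fK, of Bl cj] Bl by blast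
  have Pin: "\<forall>j\<in>set_tree Tt0. inorder (PB a b Bl j) = [Suc (a j)..<b j]"
    using Bl F1 dr_facts(5) stT unfolding PB_def by blast
  have "inorder (ph a b (PB a b Bl) Tt0) = concat (map (\<lambda>j. [a j..<Suc (b j)]) (inorder Tt0))"
    using ph_inorder[OF Pin] oK stT by simp
  also have "\<dots> = [1..<n+1]" using tt(1) cover by (simp del: upt_Suc)
  finally have "OPT n S \<le> c'" using OPT_le sim(1) by blast
  then show ?thesis using sim(2) unfolding cj_def Sj_def K_def by simp
qed

end
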